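(* Let $e_1,\dots,e_k\in\mathbb{C}^{n\times n}$ be an irreducible anticommuting family. Then every $e_i$ is either invertible or nilpotent. Moreover: (1) for every $i\in[k]$ there is $\lambda_i\in\mathbb{C}$ with $\mathrm{spec}(e_i)\subseteq\{\lambda_i,-\lambda_i\}$; (2) if at least two of the matrices $e_1,\dots,e_k$ are invertible, then $n$ is even and for every invertible $e_i$ the algebraic multiplicity of $\lambda_i$ as an eigenvalue of $e_i$ is exactly $n/2$.
   Context: A family $e_1,\dots,e_k$ of complex $n\times n$ matrices is called anticommuting if $e_ie_j=-e_je_i$ for all distinct $i,j\in[k]=\{1,\dots,k\}$. For $X_1\in\mathbb{C}^{r_1\times r_1}$, $X_2\in\mathbb{C}^{r_2\times r_2}$, $X_1\oplus X_2$ denotes the block-diagonal matrix $\begin{pmatrix}X_1&0\\0&X_2\end{pmatrix}$. A family $e_1,\dots,e_k\in\mathbb{C}^{n\times n}$ is reducible if there exist an invertible $V\in\mathbb{C}^{n\times n}$ and integers $0<r_1<n$, $r_2=n-r_1$, and matrices $e_i(1)\in\mathbb{C}^{r_1\times r_1}$, $e_i(2)\in\mathbb{C}^{r_2\times r_2}$ such that $Ve_iV^{-1}=e_i(1)\oplus e_i(2)$ for all $i\in[k]$; otherwise it is irreducible. $\mathrm{spec}(X)$ is the set of eigenvalues of $X$. *)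

theory Defs
  imports "Jordan_Normal_Form.Spectral_Radius"
begin

definition anticommuting :: "nat \<Rightarrow> nat \<Rightarrow> (nat \<Rightarrow> complex mat) \<Rightarrow> bool" where
  "anticommuting n k e \<longleftrightarrow>
     (\<forall>i\<in>{1..k}. e i \<in> carrier_mat n n) \<and>
     (\<forall>i\<in>{1..k}. \<forall>j\<in>{1..k}. i \<noteq> j \<longrightarrow> e i * e j = - (e j * e i))"

definition reducible_family :: "nat \<Rightarrow> nat \<Rightarrow> (nat \<Rightarrow> complex mat) \<Rightarrow> bool" where
  "reducible_family n k e \<longleftrightarrow>
     (\<exists>V Vinv r1 (E1 :: nat \<Rightarrow> complex mat) (E2 :: nat \<Rightarrow> complex mat).
        V \<in> carrier_mat n n \<and> Vinv \<in> carrier_mat n n \<and>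
        V * Vinv = 1\<^sub>m n \<and> Vinv * V = 1\<^sub>m n \<and>
        0 < r1 \<and> r1 < n \<and>
        (\<forall>i\<in>{1..k}. E1 i \<in> carrier_mat r1 r1 \<and> E2 i \<in> carrier_mat (n - r1) (n - r1) \<and>
           V * e i * Vinv = four_block_mat (E1 i) (0\<^sub>m r1 (n - r1)) (0\<^sub>m (n - r1) r1) (E2 i)))"

definition irreducible_family :: "nat \<Rightarrow> nat \<Rightarrow> (nat \<Rightarrow> complex mat) \<Rightarrow> bool" where
  "irreducible_family n k e \<longleftrightarrow> \<not> reducible_family n k e"

definition nilpotent_mat :: "complex mat \<Rightarrow> bool" where
  "nilpotent_mat A \<longleftrightarrow> (\<exists>m. A ^\<^sub>m m = 0\<^sub>m (dim_row A) (dim_col A))"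

definition alg_mult :: "complex mat \<Rightarrow> complex \<Rightarrow> nat" where
  "alg_mult A x = order x (char_poly A)"

end

theory Submission
  imports Defs
begin

lemma jm_append: "jordan_matrix (xs @ ys) = four_block_mat (jordan_matrix xs)
  (0\<^sub>m (sum_list (map fst xs)) (sum_list (map fst ys)))
  (0\<^sub>m (sum_list (map fst ys)) (sum_list (map fst xs))) (jordan_matrix ys)"
  unfolding jordan_matrix_def
  by (simp add: diag_block_mat_append Let_def jordan_matrix_def[symmetric])

lemma similar_swap:
  fixes A B :: "'a :: comm_ring_1 mat"
  assumes A: "A \<in> carrier_mat a a" and B: "B \<in> carrier_mat b b"
  shows "similar_mat (four_block_mat A (0\<^sub>m a b) (0\<^sub>m b a) B) (four_block_mat B (0\<^sub>m b a) (0\<^sub>m a b) A)"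
proof -
  define P where "P = four_block_mat (0\<^sub>m a b) (1\<^sub>m a) (1\<^sub>m b) (0\<^sub>m b a :: 'a mat)"
  define Q where "Q = four_block_mat (0\<^sub>m b a) (1\<^sub>m b) (1\<^sub>m a) (0\<^sub>m a b :: 'a mat)"
  have PQ: "P * Q = 1\<^sub>m (a+b)" unfolding P_def Q_def
    by (subst mult_four_block_mat[where ?nr1.0=a and ?n1.0=b and ?n2.0=a and ?nr2.0=b and ?nc1.0=a and ?nc2.0=b], auto)
  have QP: "Q * P = 1\<^sub>m (b+a)" unfolding P_def Q_def
    by (subst mult_four_block_mat[where ?nr1.0=b and ?n1.0=a and ?n2.0=b and ?nr2.0=a and ?nc1.0=b and ?nc2.0=a], auto)
  have 1: "P * four_block_mat B (0\<^sub>m b a) (0\<^sub>m a b) A = four_block_mat (0\<^sub>m a b) A B (0\<^sub>m b a)"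
    unfolding P_def using A B
    by (subst mult_four_block_mat[where ?nr1.0=a and ?n1.0=b and ?n2.0=a and ?nr2.0=b and ?nc1.0=b and ?nc2.0=a], auto)
  have 2: "four_block_mat (0\<^sub>m a b) A B (0\<^sub>m b a) * Q = four_block_mat A (0\<^sub>m a b) (0\<^sub>m b a) B"
    unfolding Q_def using A B
    by (subst mult_four_block_mat[where ?nr1.0=a and ?n1.0=b and ?n2.0=a and ?nr2.0=b and ?nc1.0=a and ?nc2.0=b], auto)
  have "similar_mat_wit (four_block_mat A (0\<^sub>m a b) (0\<^sub>m b a) B) (four_block_mat B (0\<^sub>m b a) (0\<^sub>m a b) A) P Q"
    unfolding similar_mat_wit_def Let_def using A B PQ QP 1 2
    by (auto simp: P_def Q_def add.commute)
  thus ?thesis unfolding similar_mat_def by blast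
qed

lemma sum_filter_split: "sum_list (map fst (filter P xs)) + sum_list (map fst (filter (\<lambda>x. \<not> P x) xs)) = (sum_list (map fst xs) :: nat)"
  by (induct xs, auto)

lemma jm_swap1: fixes x :: "nat \<times> 'a :: comm_ring_1" shows "similar_mat (jordan_matrix (x # F)) (jordan_matrix (F @ [x]))"
proof -
  have "jordan_matrix (x # F) = jordan_matrix ([x] @ F)" by simp
  also have "\<dots> = four_block_mat (jordan_matrix [x])
  (0\<^sub>m (sum_list (map fst [x])) (sum_list (map fst F)))
  (0\<^sub>m (sum_list (map fst F)) (sum_list (map fst [x]))) (jordan_matrix F)" by (rule jm_append)
  finally have 1: "jordan_matrix (x # F) = \<dots>" .
  have 2: "jordan_matrix (F @ [x]) = four_block_mat (jordan_matrix F)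
  (0\<^sub>m (sum_list (map fst F)) (sum_list (map fst [x])))
  (0\<^sub>m (sum_list (map fst [x])) (sum_list (map fst F))) (jordan_matrix [x])" by (rule jm_append)
  show ?thesis unfolding 1 2 by (rule similar_swap, auto)
qed

lemma jm_reorder: fixes n_as :: "(nat \<times> 'a :: comm_ring_1) list" shows "similar_mat (jordan_matrix n_as) (jordan_matrix (filter P n_as @ filter (\<lambda>x. \<not> P x) n_as))"
proof (induct n_as)
  case Nil
  show ?case by (simp add: jordan_matrix_def, rule similar_mat_refl[of _ 0], simp)
next
  case (Cons x xs)
  obtain m a where x: "x = (m,a)" by force
  define F where "F = filter P xs"
  define G where "G = filter (\<lambda>x. \<not> P x) xs"
  have sFG: "sum_list (map fst (F @ G)) = sum_list (map fst xs)"
    using sum_filter_split[of P xs] unfolding F_def G_def by simp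
  have step1: "similar_mat (jordan_matrix (x # xs)) (jordan_matrix (x # (F @ G)))"
    unfolding x jordan_matrix_Cons sFG
    by (rule similar_mat_four_block_0_0[OF similar_mat_refl Cons[folded F_def G_def]], auto)
  show ?case
  proof (cases "P x")
    case True
    thus ?thesis using step1 by (simp add: F_def G_def)
  next
    case False
    have e1: "jordan_matrix (x # F @ G) = four_block_mat (jordan_matrix (x # F))
      (0\<^sub>m (sum_list (map fst (x # F))) (sum_list (map fst G)))
      (0\<^sub>m (sum_list (map fst G)) (sum_list (map fst (x # F)))) (jordan_matrix G)"
      using jm_append[of "x # F" G] by simp
    have e2: "jordan_matrix (F @ x # G) = four_block_mat (jordan_matrix (F @ [x]))
      (0\<^sub>m (sum_list (map fst (x # F))) (sum_list (map fst G)))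
      (0\<^sub>m (sum_list (map fst G)) (sum_list (map fst (x # F)))) (jordan_matrix G)"
      using jm_append[of "F @ [x]" G] by (simp add: add.commute)
    have "similar_mat (jordan_matrix (x # F @ G)) (jordan_matrix (F @ x # G))"
      unfolding e1 e2
      by (rule similar_mat_four_block_0_0[OF jm_swap1 similar_mat_refl], auto)
    with step1 False show ?thesis
      by (simp add: F_def G_def, metis similar_mat_trans F_def G_def)
  qed
qed

lemma fb_eq_parts:
  assumes A: "A \<in> carrier_mat a c" "A' \<in> carrier_mat a c"
  and B: "B \<in> carrier_mat a d" "B' \<in> carrier_mat a d"
  and C: "C \<in> carrier_mat b c" "C' \<in> carrier_mat b c"
  and D: "D \<in> carrier_mat b d" "D' \<in> carrier_mat b d"
  and eq: "four_block_mat A B C D = four_block_mat A' B' C' D'"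
  shows "A = A' \<and> B = B' \<and> C = C' \<and> D = D'"
proof -
  have e: "\<And>i j. four_block_mat A B C D $$ (i,j) = four_block_mat A' B' C' D' $$ (i,j)" using eq by simp
  have "A = A'"
  proof (rule eq_matI)
    fix i j assume "i < dim_row A'" "j < dim_col A'"
    thus "A $$ (i,j) = A' $$ (i,j)" using e[of i j] A B C D by auto
  qed (insert A, auto)
  moreover have "B = B'"
  proof (rule eq_matI)
    fix i j assume "i < dim_row B'" "j < dim_col B'"
    thus "B $$ (i,j) = B' $$ (i,j)" using e[of i "j + c"] A B C D by auto
  qed (insert B, auto)
  moreover have "C = C'"
  proof (rule eq_matI)
    fix i j assume "i < dim_row C'" "j < dim_col C'"
    thus "C $$ (i,j) = C' $$ (i,j)" using e[of "i + a" j] A B C D by auto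
  qed (insert C, auto)
  moreover have "D = D'"
  proof (rule eq_matI)
    fix i j assume "i < dim_row D'" "j < dim_col D'"
    thus "D $$ (i,j) = D' $$ (i,j)" using e[of "i + a" "j + c"] A B C D by auto
  qed (insert D, auto)
  ultimately show ?thesis by blast
qed

lemma det_inv:
  fixes A :: "'a :: field mat"
  assumes A: "A \<in> carrier_mat n n" and d: "det A \<noteq> 0"
  shows "\<exists>B\<in>carrier_mat n n. A * B = 1\<^sub>m n \<and> B * A = 1\<^sub>m n"
proof -
  note adj = adj_mat[OF A]
  define B where "B = inverse (det A) \<cdot>\<^sub>m adj_mat A"
  have Bc: "B \<in> carrier_mat n n" unfolding B_def using adj by simp
  have "A * B = inverse (det A) \<cdot>\<^sub>m (A * adj_mat A)" unfolding B_def
    using mult_smult_distrib[OF A adj(1)] .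
  also have "\<dots> = 1\<^sub>m n" unfolding adj(2) using d by (intro eq_matI, auto)
  finally have 1: "A * B = 1\<^sub>m n" .
  have "B * A = inverse (det A) \<cdot>\<^sub>m (adj_mat A * A)" unfolding B_def
    using mult_smult_assoc_mat[OF adj(1) A] .
  also have "\<dots> = 1\<^sub>m n" unfolding adj(3) using d by (intro eq_matI, auto)
  finally show ?thesis using 1 Bc by blast
qed

lemma inv_det:
  fixes A :: "'a :: comm_ring_1 mat"
  assumes A: "A \<in> carrier_mat n n" and B: "B \<in> carrier_mat n n" and AB: "A * B = 1\<^sub>m n"
  shows "det A \<noteq> 0"
proof
  assume "det A = 0"
  hence "det (A * B) = 0" using det_mult[OF A B] by simp
  thus False using AB by simp
qed

lemma right_cancel_pow:
  fixes X :: "'a :: comm_ring_1 mat"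
  assumes X: "X \<in> carrier_mat a b" and C: "C \<in> carrier_mat b b" and D: "D \<in> carrier_mat b b"
  and CD: "C * D = 1\<^sub>m b"
  shows "X * C ^\<^sub>m m = 0\<^sub>m a b \<Longrightarrow> X = 0\<^sub>m a b"
proof (induct m)
  case 0
  thus ?case using X C by simp
next
  case (Suc m)
  define Y where "Y = X * C ^\<^sub>m m"
  have Y: "Y \<in> carrier_mat a b" unfolding Y_def using X C by auto
  have "Y * C = 0\<^sub>m a b" unfolding Y_def using Suc(2) X C by (simp add: assoc_mult_mat[of _ a b _ b _ b])
  hence "Y * C * D = 0\<^sub>m a b" using D by simp
  hence "Y = 0\<^sub>m a b" using Y C D CD by (simp add: assoc_mult_mat[of _ a b _ b _ b])
  thus ?case using Suc(1) unfolding Y_def by simp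
qed

lemma left_cancel_pow:
  fixes Y :: "'a :: comm_ring_1 mat"
  assumes C: "C \<in> carrier_mat b b" and D: "D \<in> carrier_mat b b"
  and DC: "D * C = 1\<^sub>m b"
  shows "Y \<in> carrier_mat b a \<Longrightarrow> C ^\<^sub>m m * Y = 0\<^sub>m b a \<Longrightarrow> Y = 0\<^sub>m b a"
proof (induct m arbitrary: Y)
  case 0
  thus ?case using C by simp
next
  case (Suc m)
  have CY: "C * Y \<in> carrier_mat b a" using C Suc(2) by auto
  have "C ^\<^sub>m m * (C * Y) = 0\<^sub>m b a" using Suc(2,3) C
    by (simp add: assoc_mult_mat[of _ b b _ b _ a])
  from Suc(1)[OF CY this] have "D * (C * Y) = 0\<^sub>m b a" using D by simp
  thus ?case using Suc(2) C D DC by (simp add: assoc_mult_mat[symmetric, of _ b b _ b _ a])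
qed

lemma sylv_pow:
  fixes X :: "'a :: comm_ring_1 mat"
  assumes N: "N \<in> carrier_mat a a" and X: "X \<in> carrier_mat a b" and C: "C \<in> carrier_mat b b"
  and eq: "N * X = X * C"
  shows "N ^\<^sub>m m * X = X * C ^\<^sub>m m"
proof (induct m)
  case 0
  thus ?case using X N C by simp
next
  case (Suc m)
  have "N ^\<^sub>m Suc m * X = N ^\<^sub>m m * (N * X)" using N X by (simp add: assoc_mult_mat[of _ a a _ a _ b])
  also have "\<dots> = N ^\<^sub>m m * X * C" unfolding eq using N X C by (simp add: assoc_mult_mat[of _ a a _ b _ b])
  also have "\<dots> = X * C ^\<^sub>m Suc m" unfolding Suc using X C by (simp add: assoc_mult_mat[of _ a b _ b _ b])
  finally show ?case .
qed

lemma sylvester_zero: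
  fixes X :: "'a :: comm_ring_1 mat"
  assumes N: "N \<in> carrier_mat a a" and X: "X \<in> carrier_mat a b" and C: "C \<in> carrier_mat b b"
  and D: "D \<in> carrier_mat b b" and CD: "C * D = 1\<^sub>m b" and Nm: "N ^\<^sub>m m = 0\<^sub>m a a"
  and eq: "N * X = X * C"
  shows "X = 0\<^sub>m a b"
proof -
  have "X * C ^\<^sub>m m = 0\<^sub>m a b" using sylv_pow[OF N X C eq, of m] Nm X by simp
  thus ?thesis using right_cancel_pow[OF X C D CD] by blast
qed

lemma sylvester_zero2:
  fixes Y :: "'a :: comm_ring_1 mat"
  assumes N: "N \<in> carrier_mat a a" and Y: "Y \<in> carrier_mat b a" and C: "C \<in> carrier_mat b b"
  and D: "D \<in> carrier_mat b b" and DC: "D * C = 1\<^sub>m b" and Nm: "N ^\<^sub>m m = 0\<^sub>m a a"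
  and eq: "C * Y = Y * N"
  shows "Y = 0\<^sub>m b a"
proof -
  have "C ^\<^sub>m m * Y = 0\<^sub>m b a" using sylv_pow[OF C Y N eq, of m] Nm Y by simp
  thus ?thesis using left_cancel_pow[OF C D DC Y] by blast
qed

lemma jm_zero_pow:
  fixes xs :: "(nat \<times> 'a :: field) list"
  assumes "\<forall>x\<in>set xs. snd x = 0" and "sum_list (map fst xs) \<le> N"
  shows "jordan_matrix xs ^\<^sub>m N = 0\<^sub>m (sum_list (map fst xs)) (sum_list (map fst xs))"
  unfolding jordan_matrix_pow using assms
proof (induct xs)
  case Nil
  then show ?case by simp
next
  case (Cons x xs)
  obtain m a where x: "x = (m,a)" by force
  with Cons(2) have a: "a = 0" by auto
  have blk: "jordan_block m a ^\<^sub>m N = 0\<^sub>m m m" unfolding a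
    using Cons(3) x by (intro eq_matI, auto simp: jordan_block_zero_pow)
  have IH: "diag_block_mat (map (\<lambda>(n, a). jordan_block n a ^\<^sub>m N) xs) = 0\<^sub>m (sum_list (map fst xs)) (sum_list (map fst xs))"
    using Cons by auto
  show ?case unfolding x by (simp add: Let_def blk IH)
qed

lemma poly_prod_nonzero:
  fixes ys :: "(nat \<times> 'a :: field) list"
  assumes "\<forall>x\<in>set ys. snd x \<noteq> 0"
  shows "poly (\<Prod>(n, a)\<leftarrow>ys. [:- a, 1:] ^ n) 0 \<noteq> 0"
  using assms by (induct ys, auto)

lemma jm_nonzero_det:
  fixes ys :: "(nat \<times> 'a :: field) list"
  assumes "\<forall>x\<in>set ys. snd x \<noteq> 0"
  shows "det (jordan_matrix ys) \<noteq> 0"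
proof -
  let ?J = "jordan_matrix ys"
  let ?s = "sum_list (map fst ys)"
  have J: "?J \<in> carrier_mat ?s ?s" by simp
  have cm: "char_matrix ?J 0 = ?J" unfolding char_matrix_def by (intro eq_matI, auto)
  have "poly (char_poly ?J) 0 \<noteq> 0" unfolding jordan_matrix_char_poly
    by (rule poly_prod_nonzero[OF assms])
  hence "det (- ?J) \<noteq> 0" unfolding char_poly_matrix[OF J] cm .
  thus ?thesis using det_0_negate[OF J] by simp
qed

lemma char_matrix_char_matrix:
  "char_matrix (char_matrix A a) b = char_matrix (A :: 'a :: field mat) (a + b)"
  unfolding char_matrix_def by (intro eq_matI, auto)

lemma eigenvalue_shift:
  fixes A :: "'a :: field mat"
  assumes A: "A \<in> carrier_mat n n"
  shows "eigenvalue (char_matrix A a) b \<longleftrightarrow> eigenvalue A (a + b)"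
  using A by (simp add: eigenvalue_det[of _ n] char_matrix_char_matrix)

lemma char_matrix_commute:
  fixes A :: "'a :: field mat"
  assumes A: "A \<in> carrier_mat n n" and B: "B \<in> carrier_mat n n" and AB: "A * B = B * A"
  shows "char_matrix A a * B = B * char_matrix A a"
proof -
  have "char_matrix A a * B = A * B + (-a) \<cdot>\<^sub>m B" unfolding char_matrix_def using A B
    by (simp add: add_mult_distrib_mat[of _ n n] mult_smult_assoc_mat[of _ n n])
  also have "\<dots> = B * A + (-a) \<cdot>\<^sub>m B" unfolding AB ..
  also have "\<dots> = B * char_matrix A a" unfolding char_matrix_def using A B
    using mult_smult_distrib[OF B one_carrier_mat[of n], of "-a"]
    by (simp add: mult_add_distrib_mat[of _ n n])
  finally show ?thesis .
qed

lemma sum_filter_le: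
  "b \<noteq> 0 \<Longrightarrow> sum_list (map fst (filter (\<lambda>na. snd na = b) n_as)) \<le> (sum_list (map fst (filter (\<lambda>x. \<not> snd x = 0) n_as)) :: nat)"
  by (induct n_as, auto)

lemma conj_commute_mat:
  fixes M E P Q :: "'a :: comm_ring_1 mat"
  assumes c: "M \<in> carrier_mat n n" "E \<in> carrier_mat n n" "P \<in> carrier_mat n n" "Q \<in> carrier_mat n n"
  and PQ: "P * Q = 1\<^sub>m n" and ME: "M * E = E * M"
  shows "(Q * M * P) * (Q * E * P) = (Q * E * P) * (Q * M * P)"
proof -
  have "(Q * M * P) * (Q * E * P) = Q * M * (P * Q) * E * P" using c by (simp add: assoc_mult_mat[of _ n n _ n _ n])
  also have "\<dots> = Q * (M * E) * P" using c PQ by (simp add: assoc_mult_mat[of _ n n _ n _ n])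
  also have "\<dots> = Q * (E * M) * P" using ME by simp
  also have "\<dots> = Q * E * (P * Q) * M * P" using c PQ by (simp add: assoc_mult_mat[of _ n n _ n _ n])
  also have "\<dots> = (Q * E * P) * (Q * M * P)" using c by (simp add: assoc_mult_mat[of _ n n _ n _ n])
  finally show ?thesis .
qed

lemma commute_reducible:
  fixes e :: "nat \<Rightarrow> complex mat"
  assumes ec: "\<forall>i\<in>{1..k}. e i \<in> carrier_mat n n" and M: "M \<in> carrier_mat n n"
  and comm: "\<forall>i\<in>{1..k}. M * e i = e i * M"
  and ev0: "eigenvalue M 0" and evb: "eigenvalue M b" and b: "b \<noteq> 0"
  shows "reducible_family n k e"
proof -
  from char_poly_factorized[OF M] obtain as where "char_poly M = (\<Prod>a\<leftarrow>as. [:- a, 1:])" by auto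
  from jordan_nf_exists[OF M this] obtain n_as where jnf: "jordan_nf M n_as" by auto
  define xs where "xs = filter (\<lambda>x. snd x = 0) n_as"
  define ys where "ys = filter (\<lambda>x. \<not> snd x = 0) n_as"
  define r1 where "r1 = sum_list (map fst xs)"
  define r2 where "r2 = sum_list (map fst ys)"
  define J1 where "J1 = jordan_matrix xs"
  define J2 where "J2 = jordan_matrix ys"
  define J where "J = jordan_matrix (xs @ ys)"
  have J1c: "J1 \<in> carrier_mat r1 r1" unfolding J1_def r1_def by simp
  have J2c: "J2 \<in> carrier_mat r2 r2" unfolding J2_def r2_def by simp
  have JJ: "J = four_block_mat J1 (0\<^sub>m r1 r2) (0\<^sub>m r2 r1) J2"
    unfolding J_def J1_def J2_def r1_def r2_def by (rule jm_append)
  have sim: "similar_mat M J" unfolding J_def xs_def ys_def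
    using jnf[unfolded jordan_nf_def] jm_reorder similar_mat_trans by blast
  then obtain P Q where wit: "similar_mat_wit M J P Q" unfolding similar_mat_def by blast
  note w = similar_mat_witD2[OF M wit]
  have "J \<in> carrier_mat (r1 + r2) (r1 + r2)" unfolding JJ using J1c J2c by simp
  with w(5) have nr: "n = r1 + r2" by auto
  have cp0: "char_poly M \<noteq> 0" using degree_monic_char_poly[OF M] by auto
  have "order 0 (char_poly M) \<noteq> 0" using ev0 cp0 order_root eigenvalue_root_char_poly[OF M] by blast
  moreover have "order 0 (char_poly M) = r1" unfolding jordan_nf_order[OF jnf] r1_def xs_def by (rule refl)
  ultimately have r1p: "r1 > 0" by simp
  have "order b (char_poly M) \<noteq> 0" using evb cp0 order_root eigenvalue_root_char_poly[OF M] by blast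
  moreover have "order b (char_poly M) = sum_list (map fst (filter (\<lambda>na. snd na = b) n_as))"
    by (rule jordan_nf_order[OF jnf])
  ultimately have r2p: "r2 > 0" unfolding r2_def ys_def using sum_filter_le[OF b, of n_as] by linarith
  have J1n: "J1 ^\<^sub>m r1 = 0\<^sub>m r1 r1" unfolding J1_def r1_def
    by (rule jm_zero_pow, auto simp: xs_def)
  have "det J2 \<noteq> 0" unfolding J2_def by (rule jm_nonzero_det, auto simp: ys_def)
  from det_inv[OF J2c this] obtain D where D: "D \<in> carrier_mat r2 r2" "J2 * D = 1\<^sub>m r2" "D * J2 = 1\<^sub>m r2" by blast
  have QMP: "Q * M * P = J"
  proof -
    have PJ: "P * J \<in> carrier_mat n n" using w by auto
    have "M * P = P * J * (Q * P)" unfolding w(3) by (rule assoc_mult_mat[OF PJ w(7) w(6)])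
    also have "\<dots> = P * J" unfolding w(2) by (rule right_mult_one_mat[OF PJ])
    finally have MP: "M * P = P * J" .
    have "Q * M * P = Q * (M * P)" by (rule assoc_mult_mat[OF w(7) M w(6)])
    also have "\<dots> = Q * P * J" unfolding MP by (rule assoc_mult_mat[OF w(7) w(6) w(5), symmetric])
    also have "\<dots> = J" unfolding w(2) using w by simp
    finally show ?thesis .
  qed
  define SB where "SB i = split_block (Q * e i * P) r1 r1" for i
  define E1 where "E1 i = fst (SB i)" for i
  define E4 where "E4 i = snd (snd (snd (SB i)))" for i
  have main: "E1 i \<in> carrier_mat r1 r1 \<and> E4 i \<in> carrier_mat (n - r1) (n - r1) \<and>
           Q * e i * P = four_block_mat (E1 i) (0\<^sub>m r1 (n - r1)) (0\<^sub>m (n - r1) r1) (E4 i)" if i: "i \<in> {1..k}" for i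
  proof -
    have ei: "e i \<in> carrier_mat n n" using ec i by auto
    define B where "B = Q * e i * P"
    have Bc: "B \<in> carrier_mat n n" unfolding B_def using ei w by auto
    obtain B1 B2 B3 B4 where sb: "split_block B r1 r1 = (B1,B2,B3,B4)" by (cases "split_block B r1 r1", auto)
    note sp = split_block[OF sb, of r2 r2, unfolded nr[symmetric]]
    have Bc1: "B1 \<in> carrier_mat r1 r1" "B2 \<in> carrier_mat r1 r2" "B3 \<in> carrier_mat r2 r1" "B4 \<in> carrier_mat r2 r2"
      using sp Bc nr by auto
    have BB: "B = four_block_mat B1 B2 B3 B4" using sp Bc nr by auto
    have "J * B = B * J" unfolding B_def QMP[symmetric]
      by (rule conj_commute_mat[OF M ei w(6) w(7) w(1)], insert comm i, auto)
    hence "four_block_mat (J1 * B1) (J1 * B2) (J2 * B3) (J2 * B4) = four_block_mat (B1 * J1) (B2 * J2) (B3 * J1) (B4 * J2)"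
      unfolding JJ BB using J1c J2c Bc1
      by (simp add: mult_four_block_mat[OF J1c _ _ J2c Bc1] mult_four_block_mat[OF Bc1 J1c _ _ J2c])
    from fb_eq_parts[of _ r1 r1 _ _ r2 _ _ r2, OF _ _ _ _ _ _ _ _ this] J1c J2c Bc1
    have eq: "J1 * B2 = B2 * J2" "J2 * B3 = B3 * J1" by auto
    have B2: "B2 = 0\<^sub>m r1 r2" by (rule sylvester_zero[OF J1c Bc1(2) J2c D(1) D(2) J1n eq(1)])
    have B3: "B3 = 0\<^sub>m r2 r1" by (rule sylvester_zero2[OF J1c Bc1(3) J2c D(1) D(3) J1n eq(2)])
    have "E1 i = B1" "E4 i = B4" unfolding E1_def E4_def SB_def B_def[symmetric] sb by auto
    thus ?thesis using Bc1 BB B2 B3 nr unfolding B_def by auto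
  qed
  show ?thesis unfolding reducible_family_def
    apply (rule exI[of _ Q], rule exI[of _ P], rule exI[of _ r1], rule exI[of _ E1], rule exI[of _ E4])
    using w main r1p r2p nr by auto
qed

lemma sq_commute:
  fixes E F :: "'a :: comm_ring_1 mat"
  assumes E: "E \<in> carrier_mat n n" and F: "F \<in> carrier_mat n n" and EF: "E * F = - (F * E)"
  shows "(E * E) * F = F * (E * E)"
proof -
  have "(E * E) * F = E * (E * F)" using E F by simp
  also have "\<dots> = - (E * (F * E))" unfolding EF using E F by simp
  also have "E * (F * E) = (E * F) * E" using E F by simp
  also have "\<dots> = - ((F * E) * E)" unfolding EF using E F by simp
  also have "- (- ((F * E) * E)) = (F * E) * E" by simp
  also have "\<dots> = F * (E * E)" using E F by simp
  finally show ?thesis .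
qed

lemma eigen_sq:
  fixes E :: "'a :: comm_ring_1 mat"
  assumes E: "E \<in> carrier_mat n n" and ev: "eigenvalue E c"
  shows "eigenvalue (E * E) (c^2)"
proof -
  from ev obtain v where v: "eigenvector E v c" unfolding eigenvalue_def by auto
  have "E ^\<^sub>m 2 *\<^sub>v v = c^2 \<cdot>\<^sub>v v" by (rule eigenvector_pow[OF E v])
  moreover have "E ^\<^sub>m 2 = E * E" using E by (simp add: numeral_2_eq_2)
  ultimately have "(E * E) *\<^sub>v v = c^2 \<cdot>\<^sub>v v" by simp
  thus ?thesis using v E unfolding eigenvalue_def eigenvector_def by auto
qed

lemma mem_le_sum_filter:
  "x \<in> set xs \<Longrightarrow> P x \<Longrightarrow> fst x \<le> (sum_list (map fst (filter P xs)) :: nat)"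
  by (induct xs, auto)

lemma jnf_dim:
  assumes E: "E \<in> carrier_mat n n" and jnf: "jordan_nf E n_as"
  shows "n = sum_list (map fst n_as)"
proof -
  from jnf obtain P Q where "similar_mat_wit E (jordan_matrix n_as) P Q" unfolding jordan_nf_def similar_mat_def by blast
  from similar_mat_witD2[OF E this] show ?thesis by auto
qed

lemma jnf_block_eigen:
  fixes E :: "'a :: field mat"
  assumes E: "E \<in> carrier_mat n n" and jnf: "jordan_nf E n_as" and x: "x \<in> set n_as"
  shows "eigenvalue E (snd x)"
proof -
  have "fst x \<noteq> 0" using jnf x unfolding jordan_nf_def by force
  moreover have "fst x \<le> order (snd x) (char_poly E)" unfolding jordan_nf_order[OF jnf]
    by (rule mem_le_sum_filter[OF x], simp)
  ultimately have "order (snd x) (char_poly E) \<noteq> 0" by simp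
  thus ?thesis unfolding eigenvalue_root_char_poly[OF E] using order_root by blast
qed

lemma sum_split2:
  "\<forall>x\<in>set xs. snd x = a \<or> snd x = b \<Longrightarrow> a \<noteq> b \<Longrightarrow>
   sum_list (map fst xs) = sum_list (map fst (filter (\<lambda>na. snd na = a) xs)) + (sum_list (map fst (filter (\<lambda>na. snd na = b) xs)) :: nat)"
  by (induct xs, auto)

lemma char_matrix_0: "E \<in> carrier_mat n n \<Longrightarrow> char_matrix (E :: 'a :: field mat) 0 = E"
  unfolding char_matrix_def by (intro eq_matI, auto)

lemma not_eig0_iff_det:
  fixes E :: "'a :: field mat"
  assumes E: "E \<in> carrier_mat n n"
  shows "eigenvalue E 0 \<longleftrightarrow> det E = 0"
  using eigenvalue_det[OF E, of 0] unfolding char_matrix_0[OF E] .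

lemma invertible_from_det:
  fixes E :: "'a :: field mat"
  assumes E: "E \<in> carrier_mat n n" and d: "det E \<noteq> 0"
  shows "invertible_mat E"
proof -
  from det_inv[OF E d] obtain B where B: "B \<in> carrier_mat n n" "E * B = 1\<^sub>m n" "B * E = 1\<^sub>m n" by blast
  thus ?thesis unfolding invertible_mat_def inverts_mat_def square_mat.simps using E by auto
qed

lemma invertible_inv:
  fixes E :: "'a :: comm_ring_1 mat"
  assumes E: "E \<in> carrier_mat n n" and inv: "invertible_mat E"
  obtains B where "B \<in> carrier_mat n n" "E * B = 1\<^sub>m n" "B * E = 1\<^sub>m n"
proof -
  from inv obtain B where 1: "E * B = 1\<^sub>m (dim_row E)" and 2: "B * E = 1\<^sub>m (dim_row B)"
    unfolding invertible_mat_def inverts_mat_def by blast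
  have "dim_col (B * E) = n" using E by simp
  hence rB: "dim_row B = n" using 2 by simp
  have "dim_col (E * B) = n" using 1 E by simp
  hence cB: "dim_col B = n" by simp
  show ?thesis using that[of B] 1 2 rB cB E unfolding carrier_mat_def by auto
qed

theorem proposition4p5:
  fixes n k :: nat and e :: "nat \<Rightarrow> complex mat"
  assumes "anticommuting n k e"
    and "irreducible_family n k e"
  shows "(\<forall>i\<in>{1..k}. invertible_mat (e i) \<or> nilpotent_mat (e i)) \<and>
         (\<exists>lam :: nat \<Rightarrow> complex.
            (\<forall>i\<in>{1..k}. spectrum (e i) \<subseteq> {lam i, - lam i}) \<and>
            (2 \<le> card {i\<in>{1..k}. invertible_mat (e i)} \<longrightarrow>
               even n \<and> (\<forall>i\<in>{1..k}. invertible_mat (e i) \<longrightarrow> alg_mult (e i) (lam i) = n div 2)))"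
proof -
  have ec: "\<forall>i\<in>{1..k}. e i \<in> carrier_mat n n" and anti: "\<forall>i\<in>{1..k}. \<forall>j\<in>{1..k}. i \<noteq> j \<longrightarrow> e i * e j = - (e j * e i)"
    using assms(1) unfolding anticommuting_def by blast+
  have irr: "\<not> reducible_family n k e" using assms(2) unfolding irreducible_family_def .
  define lam where "lam i = csqrt (SOME \<mu>. eigenvalue (e i * e i) \<mu>)" for i
  have uniq: "a = b" if i: "i \<in> {1..k}" and a: "eigenvalue (e i * e i) a" and b: "eigenvalue (e i * e i) b" for i a b
  proof (rule ccontr)
    assume ab: "a \<noteq> b"
    define A where "A = e i * e i"
    have E: "e i \<in> carrier_mat n n" using ec i by auto
    have A: "A \<in> carrier_mat n n" unfolding A_def using E by auto
    have comm: "\<forall>j\<in>{1..k}. A * e j = e j * A"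
    proof
      fix j assume j: "j \<in> {1..k}"
      have F: "e j \<in> carrier_mat n n" using ec j by auto
      show "A * e j = e j * A"
      proof (cases "i = j")
        case True
        thus ?thesis unfolding A_def using E by simp
      next
        case False
        have "e i * e j = - (e j * e i)" using anti i j False by blast
        thus ?thesis unfolding A_def by (rule sq_commute[OF E F])
      qed
    qed
    define M where "M = char_matrix A a"
    have M: "M \<in> carrier_mat n n" unfolding M_def using A by simp
    have commM: "\<forall>j\<in>{1..k}. M * e j = e j * M" unfolding M_def
      using char_matrix_commute[OF A] comm ec by auto
    have ev0: "eigenvalue M 0" unfolding M_def eigenvalue_shift[OF A] using a A_def by simp
    have evb: "eigenvalue M (b - a)" unfolding M_def eigenvalue_shift[OF A] using b A_def by simp
    have "reducible_family n k e" by (rule commute_reducible[OF ec M commM ev0 evb], insert ab, auto)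
    with irr show False by simp
  qed
  have spec: "c = lam i \<or> c = - lam i" if i: "i \<in> {1..k}" and c: "eigenvalue (e i) c" for i c
  proof -
    have E: "e i \<in> carrier_mat n n" using ec i by auto
    have ev: "eigenvalue (e i * e i) (c^2)" by (rule eigen_sq[OF E c])
    hence "(SOME \<mu>. eigenvalue (e i * e i) \<mu>) = c^2" using uniq[OF i] by (metis someI_ex)
    hence "(lam i)^2 = c^2" unfolding lam_def by simp
    thus ?thesis using power2_eq_iff by metis
  qed
  have part1: "invertible_mat (e i) \<or> nilpotent_mat (e i)" if i: "i \<in> {1..k}" for i
  proof (cases "eigenvalue (e i) 0")
    case False
    have E: "e i \<in> carrier_mat n n" using ec i by auto
    have "det (e i) \<noteq> 0" using False not_eig0_iff_det[OF E] by simp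
    thus ?thesis using invertible_from_det[OF E] by simp
  next
    case True
    have E: "e i \<in> carrier_mat n n" using ec i by auto
    have l0: "lam i = 0" using spec[OF i True] by auto
    from char_poly_factorized[OF E] obtain as where "char_poly (e i) = (\<Prod>a\<leftarrow>as. [:- a, 1:])" by auto
    from jordan_nf_exists[OF E this] obtain n_as where jnf: "jordan_nf (e i) n_as" by auto
    have all0: "\<forall>x\<in>set n_as. snd x = 0" using spec[OF i jnf_block_eigen[OF E jnf]] l0 by auto
    note nd = jnf_dim[OF E jnf]
    have Jn: "jordan_matrix n_as ^\<^sub>m n = 0\<^sub>m n n" using jm_zero_pow[OF all0, of n] nd by simp
    from jnf obtain P Q where wit: "similar_mat_wit (e i) (jordan_matrix n_as) P Q" unfolding jordan_nf_def similar_mat_def by blast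
    note w = similar_mat_witD2[OF E wit]
    have "e i ^\<^sub>m n = P * jordan_matrix n_as ^\<^sub>m n * Q" by (rule similar_mat_wit_pow_id[OF wit])
    also have "\<dots> = 0\<^sub>m n n" unfolding Jn using w by simp
    finally have "e i ^\<^sub>m n = 0\<^sub>m (dim_row (e i)) (dim_col (e i))" using E by simp
    thus ?thesis unfolding nilpotent_mat_def by blast
  qed
  have spec_sub: "spectrum (e i) \<subseteq> {lam i, - lam i}" if i: "i \<in> {1..k}" for i
    using spec[OF i] unfolding spectrum_def by auto
  have part2: "even n \<and> alg_mult (e i) (lam i) = n div 2"
    if card: "2 \<le> card {i\<in>{1..k}. invertible_mat (e i)}" and i: "i \<in> {1..k}" and inv: "invertible_mat (e i)" for i
  proof -
    have E: "e i \<in> carrier_mat n n" using ec i by auto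
    obtain j where j: "j \<in> {1..k}" "j \<noteq> i" "invertible_mat (e j)"
    proof (rule ccontr)
      assume "\<not> thesis"
      with that have "{i\<in>{1..k}. invertible_mat (e i)} \<subseteq> {i}" by auto
      hence "card {i\<in>{1..k}. invertible_mat (e i)} \<le> 1" using card_mono[of "{i}"] by fastforce
      with card show False by simp
    qed
    have F: "e j \<in> carrier_mat n n" using ec j by auto
    obtain G where G: "G \<in> carrier_mat n n" "e j * G = 1\<^sub>m n" "G * e j = 1\<^sub>m n"
      using invertible_inv[OF F j(3)] by blast
    have FE: "e j * e i = - (e i * e j)" using anti i j by blast
    have "e j * e i * G = - (e i * e j) * G" unfolding FE ..
    also have "\<dots> = - (e i * e j * G)" using E F G by simp
    also have "e i * e j * G = e i" using E F G by simp
    finally have neg: "e j * e i * G = (-1) \<cdot>\<^sub>m e i" using E by (intro eq_matI, auto)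
    have "similar_mat_wit ((-1) \<cdot>\<^sub>m e i) (e i) (e j) G"
      unfolding similar_mat_wit_def Let_def using E F G neg by auto
    hence "char_poly ((-1) \<cdot>\<^sub>m e i) = char_poly (e i)" using char_poly_similar unfolding similar_mat_def by blast
    hence ordeq: "order (lam i) (char_poly (e i)) = order (- lam i) (char_poly (e i))"
      using order_char_poly_smult[OF E, of "-1" "lam i"] by simp
    obtain H where H: "H \<in> carrier_mat n n" "e i * H = 1\<^sub>m n" "H * e i = 1\<^sub>m n"
      using invertible_inv[OF E inv] by blast
    have nz: "\<not> eigenvalue (e i) 0"
      using not_eig0_iff_det[OF E] inv_det[OF E H(1,2)] by simp
    from char_poly_factorized[OF E] obtain as where "char_poly (e i) = (\<Prod>a\<leftarrow>as. [:- a, 1:])" by auto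
    from jordan_nf_exists[OF E this] obtain n_as where jnf: "jordan_nf (e i) n_as" by auto
    note nd = jnf_dim[OF E jnf]
    have blocks: "\<forall>x\<in>set n_as. snd x = lam i \<or> snd x = - lam i" using spec[OF i jnf_block_eigen[OF E jnf]] by auto
    show ?thesis
    proof (cases "n_as = []")
      case True
      thus ?thesis using nd unfolding alg_mult_def jordan_nf_order[OF jnf] by simp
    next
      case False
      then obtain x where x: "x \<in> set n_as" by (cases n_as, auto)
      have "snd x \<noteq> 0" using jnf_block_eigen[OF E jnf x] nz by metis
      hence "lam i \<noteq> 0" using blocks x by auto
      hence ne: "lam i \<noteq> - lam i" by simp
      have "n = order (lam i) (char_poly (e i)) + order (- lam i) (char_poly (e i))"
        unfolding nd jordan_nf_order[OF jnf] by (rule sum_split2[OF blocks ne])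
      thus ?thesis unfolding alg_mult_def ordeq by simp
    qed
  qed
  have fin: "2 \<le> card {i\<in>{1..k}. invertible_mat (e i)} \<longrightarrow>
               even n \<and> (\<forall>i\<in>{1..k}. invertible_mat (e i) \<longrightarrow> alg_mult (e i) (lam i) = n div 2)"
  proof
    assume c: "2 \<le> card {i\<in>{1..k}. invertible_mat (e i)}"
    hence "{i\<in>{1..k}. invertible_mat (e i)} \<noteq> {}" by (metis card.empty not_numeral_le_zero)
    then obtain i0 where "i0 \<in> {1..k}" "invertible_mat (e i0)" by blast
    thus "even n \<and> (\<forall>i\<in>{1..k}. invertible_mat (e i) \<longrightarrow> alg_mult (e i) (lam i) = n div 2)"
      using part2[OF c] by blast
  qed
  show ?thesis
    apply (rule conjI)
    using part1 apply blast
    apply (rule exI[of _ lam])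
    using spec_sub fin by blast
qed

end
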